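(* The abelian group $\ell^\infty(\mathbb{Z})_S$ is uniquely divisible, i.e. it admits a (unique) structure of a $\mathbb{Q}$-vector space.
   Context: $\ell^\infty(\mathbb{Z})$ denotes the abelian group of bounded integer-valued sequences $(a_j)_{j\in\mathbb{Z}}$, $S(a_j)_j=(a_{j+1})_j$ is the shift, and $\ell^\infty(\mathbb{Z})_S=\ell^\infty(\mathbb{Z})/\{a-Sa: a\in\ell^\infty(\mathbb{Z})\}$. *)

theory Defs
  imports Main
begin

definition linfty :: "(int \<Rightarrow> int) set" where
  "linfty = {a. \<exists>M. \<forall>j. \<bar>a j\<bar> \<le> M}"

definition shift :: "(int \<Rightarrow> int) \<Rightarrow> (int \<Rightarrow> int)" where
  "shift a = (\<lambda>j. a (j + 1))"

definition coboundaries :: "(int \<Rightarrow> int) set" where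
  "coboundaries = {(\<lambda>j. a j - shift a j) | a. a \<in> linfty}"

text \<open>Equality in the coinvariants (quotient group) linfty / coboundaries.\<close>
definition coinv_eq :: "(int \<Rightarrow> int) \<Rightarrow> (int \<Rightarrow> int) \<Rightarrow> bool" where
  "coinv_eq x y \<longleftrightarrow> (\<lambda>j. x j - y j) \<in> coboundaries"

definition coinv_uniquely_divisible :: bool where
  "coinv_uniquely_divisible \<longleftrightarrow>
     (\<forall>n::nat. n > 0 \<longrightarrow>
        (\<forall>x\<in>linfty. \<exists>y\<in>linfty. coinv_eq x (\<lambda>j. int n * y j)) \<and>
        (\<forall>y\<in>linfty. \<forall>z\<in>linfty.
            coinv_eq (\<lambda>j. int n * y j) (\<lambda>j. int n * z j) \<longrightarrow> coinv_eq y z))"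

end

theory Submission
  imports Defs
begin

lemma cob_iff: "z \<in> coboundaries \<longleftrightarrow> (\<exists>a\<in>linfty. \<forall>j. z j = a j - a (j+1))"
  unfolding coboundaries_def shift_def by (auto simp: fun_eq_iff)

lemma mod_const:
  fixes b :: "int \<Rightarrow> int" and n :: int
  assumes "\<And>j. b j mod n = b (j+1) mod n"
  shows "b i mod n = b 0 mod n"
proof (induction i rule: int_induct[where k=0])
  case base then show ?case by simp
next
  case (step1 i) then show ?case using assms[of i] by simp
next
  case (step2 i) then show ?case using assms[of "i-1"] by simp
qed

lemma surj_part:
  fixes n :: nat
  assumes n: "n > 0" and x: "x \<in> linfty"
  shows "\<exists>y\<in>linfty. coinv_eq x (\<lambda>j. int n * y j)"
proof -
  obtain M where M: "\<And>j. \<bar>x j\<bar> \<le> M" using x unfolding linfty_def by auto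
  define P where "P j = (\<Sum>i\<in>{j..<0}. x i) - (\<Sum>i\<in>{0..<j}. x i)" for j :: int
  have P: "P j - P (j+1) = x j" for j
  proof (cases "j \<ge> 0")
    case True
    have a: "{j..<0} = {}" "{j+1..<0} = {}" using True by auto
    have "{0..<j+1} = insert j {0..<j}" using True by auto
    then have "(\<Sum>i\<in>{0..<j+1}. x i) = x j + (\<Sum>i\<in>{0..<j}. x i)" by simp
    then show ?thesis unfolding P_def a by simp
  next
    case False
    have a: "{0..<j} = {}" "{0..<j+1} = {}" using False by auto
    have "{j..<0} = insert j {j+1..<0}" using False by auto
    then have "(\<Sum>i\<in>{j..<0}. x i) = x j + (\<Sum>i\<in>{j+1..<0}. x i)" by simp
    then show ?thesis unfolding P_def a by simp
  qed
  define nn where "nn = int n"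
  have nn: "nn > 0" using n nn_def by simp
  define y where "y j = P j div nn - P (j+1) div nn" for j
  define b where "b j = P j mod nn" for j
  have b: "b j - b (j+1) = x j - nn * y j" for j
  proof -
    have "P j = nn * (P j div nn) + P j mod nn" "P (j+1) = nn * (P (j+1) div nn) + P (j+1) mod nn"
      by simp_all
    then show ?thesis unfolding b_def y_def using P[of j] by (simp add: algebra_simps)
  qed
  have bb: "0 \<le> b j \<and> b j < nn" for j unfolding b_def using nn by simp
  have "\<bar>nn * y j\<bar> \<le> M + nn" for j
  proof -
    have "nn * y j = x j - (b j - b (j+1))" using b[of j] by simp
    then show ?thesis using M[of j] bb[of j] bb[of "j+1"] by linarith
  qed
  then have "\<bar>y j\<bar> \<le> M + nn" for j
  proof -
    have "\<bar>y j\<bar> \<le> \<bar>nn * y j\<bar>" using nn by (simp add: abs_mult mult_le_cancel_right1)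
    then show ?thesis using \<open>\<And>j. \<bar>nn * y j\<bar> \<le> M + nn\<close>[of j] by linarith
  qed
  then have yl: "y \<in> linfty" unfolding linfty_def by auto
  have bl: "b \<in> linfty" unfolding linfty_def using bb
    by (intro CollectI exI[of _ nn]) (metis abs_of_nonneg less_le)
  show ?thesis
    apply (rule bexI[OF _ yl])
    unfolding coinv_eq_def cob_iff using bl b nn_def by metis
qed

lemma inj_part:
  fixes n :: nat
  assumes n: "n > 0" and y: "y \<in> linfty" and z: "z \<in> linfty"
    and e: "coinv_eq (\<lambda>j. int n * y j) (\<lambda>j. int n * z j)"
  shows "coinv_eq y z"
proof -
  define nn where "nn = int n"
  have nn: "nn > 0" using n nn_def by simp
  from e obtain b where bl: "b \<in> linfty" and b: "\<And>j. nn * y j - nn * z j = b j - b (j+1)"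
    unfolding coinv_eq_def cob_iff nn_def by auto
  obtain M where M: "\<And>j. \<bar>b j\<bar> \<le> M" using bl unfolding linfty_def by auto
  have "b j mod nn = b (j+1) mod nn" for j
  proof -
    have "b j = b (j+1) + nn * (y j - z j)" using b[of j] by (simp add: algebra_simps)
    then show ?thesis by (metis mod_mult_self2 mult.commute)
  qed
  then have m: "b j mod nn = b 0 mod nn" for j using mod_const by blast
  define c where "c j = (b j - b 0) div nn" for j
  have cd: "nn * c j = b j - b 0" for j
  proof -
    have "nn dvd (b j - b 0)" using m[of j] by (simp add: mod_eq_dvd_iff)
    then show ?thesis unfolding c_def by simp
  qed
  have "nn * (c j - c (j+1)) = nn * (y j - z j)" for j
    using cd[of j] cd[of "j+1"] b[of j] by (simp add: algebra_simps)
  then have cc: "y j - z j = c j - c (j+1)" for j using nn by simp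
  have "\<bar>c j\<bar> \<le> 2*M" for j
  proof -
    have "\<bar>c j\<bar> \<le> \<bar>nn * c j\<bar>" using nn by (simp add: abs_mult mult_le_cancel_right1)
    then show ?thesis using cd[of j] M[of j] M[of 0] by linarith
  qed
  then have "c \<in> linfty" unfolding linfty_def by auto
  then show ?thesis unfolding coinv_eq_def cob_iff using cc by blast
qed

theorem proposition5p3:
  shows "coinv_uniquely_divisible"
  unfolding coinv_uniquely_divisible_def using surj_part inj_part by blast

end
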